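(* For all $\psi\in \mathcal{L}^{\mathrel{|}\!\sim}_{\mathds{S}}$ and all $\mathcal{K}\subseteq \mathcal{L}^{\mathrel{|}\!\sim}_{\mathds{S}}$, we have that $\mathcal{K}\mathrel{|}\!\approx_{RC}\psi$ if and only if $M_{RC}^\mathcal{K}\Vdash \psi$.
   Context: Setting (Defeasible Restricted Standpoint Logic, DRSL). A vocabulary is $\mathcal{V}=(\mathcal{P},\mathcal{S})$ with $\mathcal{P}$ a finite set of atoms and $\mathcal{S}$ a finite set of standpoint symbols containing the universal standpoint $*$. The propositional KLM language $\mathcal{L}^{\mathrel{|}\!\sim}$ is $\phi::=\alpha\mid\alpha\mathrel{|}\!\sim\beta\mid\phi\wedge\phi$ ($\alpha,\beta$ Boolean over $\mathcal{P}$). The DRSL language $\mathcal{L}^{\mathrel{|}\!\sim}_{\mathds{S}}$ is $\psi::=\phi\mid\#_s\psi\mid\psi\wedge\psi$ with $\#\in\{\Box,\Diamond\}$, $s\in\mathcal{S}$, $\phi\in\mathcal{L}^{\mathrel{|}\!\sim}$, together with sharpening statements $s_1\preceq s_2$. A ranked interpretation is $R:\mathcal{U}\to\mathds{N}\cup\{\infty\}$ on classical valuations $\mathcal{U}$ of $\mathcal{P}$ satisfying convexity (if $R(u)<\infty$ every rank $j<R(u)$ is occupied); $R\Vdash\alpha$ iff every valuation of finite rank satisfies $\alpha$, and $R\Vdash\alpha\mathrel{|}\!\sim\beta$ iff all rank-minimal $\alpha$-valuations satisfy $\beta$. A ranked standpoint structure is $M=(\Pi,\sigma,\gamma)$ with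 $\Pi$ a nonempty set of precisifications, $\sigma:\mathcal{S}\to P(\Pi)$ assigning nonempty sets with $\sigma( * )=\Pi$, and $\gamma$ assigning to each precisification a ranked interpretation; $M,\pi\Vdash\phi$ iff $\gamma(\pi)\Vdash\phi$, $M,\pi\Vdash\Box_s\psi$ (resp. $\Diamond_s\psi$) iff $M,\pi'\Vdash\psi$ for all (resp. some) $\pi'\in\sigma(s)$, conjunction is componentwise, $M,\pi\Vdash s_1\preceq s_2$ iff $\sigma(s_1)\subseteq\sigma(s_2)$, and $M\Vdash\psi$ iff $M,\pi\Vdash\psi$ for all $\pi$. For a propositional KLM knowledge base $K$, $R^K_{RC}$ is the minimum ranked model of $K$ under the pointwise order on ranks, and RCProp$(K,\alpha\mathrel{|}\!\sim\beta)$ is true iff $R^K_{RC}\Vdash\alpha\mathrel{|}\!\sim\beta$. Let $\mathcal{K}$ be a DRSL knowledge base in normal form (each formula is $\#_s\phi$ with $\phi\in\mathcal{L}^{\mathrel{|}\!\sim}$, or a sharpening statement); $S$ is the set of standpoints occurring in $\mathcal{K}$ (assumed with $*$ to be all of $\mathcal{S}$), and $s\preceq^+t$ iff $t=s$, $t=*$, or there is a chain of sharpening statements in $\mathcal{K}$ from $s$ to $t$. The splitting: $K_s=\{\phi\mid\Box_t\phi\in\mathcal{K}, s\preceq^+t\}$; $K_s^\phi=K_s\cup\{\phi\}$ for each $\Diamond_s\phi\in\mathcal{K}$; $\text{Know}_s=\bigcup_{t\preceq^+s}(\{K_t\}\cup\{K_t^\phi\mid\Diamond_t\phi\in\mathcal{K}\})$,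 and $\text{Know}_*=\bigcup_{s\in S}\text{Know}_s$ minus $K_*$. $\mathcal{K}\mathrel{|}\!\approx_{RC}\psi$ is defined by the algorithm RCStandpoint: for $\psi=\Box_s\phi$ it holds iff RCProp$(K,\phi)$ is true for all $K\in\text{Know}_s$; for $\psi=\Diamond_s\phi$ iff it is true for some $K\in\text{Know}_s$; a formula without modal operator is treated as $\Box_*$ of it; a conjunction holds iff both conjuncts do. The structure $M_{RC}^\mathcal{K}=(\Pi,\sigma,\gamma)$ has $\Pi=\{\pi_s\mid s\in S-\{*\}\}\cup\{\pi_s^\phi\mid\Diamond_s\phi\in\mathcal{K}\}$, $\sigma(s)=\{\pi_t\mid t\preceq^+s\}\cup\{\pi_t^\phi\mid t\preceq^+s\}$, $\gamma(\pi_s)=R^{K_s}_{RC}$, $\gamma(\pi_s^\phi)=R^{K_s^\phi}_{RC}$. *)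

theory Defs
  imports Main "HOL-Library.Extended_Nat"
begin

datatype 'p bform = BTop | BBot | Atom 'p | BNeg "'p bform" | BConj "'p bform" "'p bform"
  | BDisj "'p bform" "'p bform" | BImp "'p bform" "'p bform"

datatype 'p klm = Cl "'p bform" | Cond "'p bform" "'p bform" | KAnd "'p klm" "'p klm"

datatype 's stp = Univ | Named 's

text \<open>DRSL formulas, including sharpening statements (Sharp s1 s2 means s1 \<preceq> s2).\<close>
datatype ('p, 's) drsl = Base "'p klm" | Box "'s stp" "('p, 's) drsl"
  | Dia "'s stp" "('p, 's) drsl" | DAnd "('p, 's) drsl" "('p, 's) drsl"
  | Sharp "'s stp" "'s stp"

type_synonym 'p valuation = "'p \<Rightarrow> bool"
type_synonym 'p ranked = "'p valuation \<Rightarrow> enat"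

fun evalb :: "'p valuation \<Rightarrow> 'p bform \<Rightarrow> bool" where
  "evalb u BTop = True"
| "evalb u BBot = False"
| "evalb u (Atom p) = u p"
| "evalb u (BNeg a) = (\<not> evalb u a)"
| "evalb u (BConj a b) = (evalb u a \<and> evalb u b)"
| "evalb u (BDisj a b) = (evalb u a \<or> evalb u b)"
| "evalb u (BImp a b) = (evalb u a \<longrightarrow> evalb u b)"

definition ranked_interp :: "'p ranked \<Rightarrow> bool" where
  "ranked_interp R \<longleftrightarrow> (\<forall>u. R u < \<infinity> \<longrightarrow> (\<forall>j::nat. enat j < R u \<longrightarrow> (\<exists>v. R v = enat j)))"

fun ksat :: "'p ranked \<Rightarrow> 'p klm \<Rightarrow> bool" where
  "ksat R (Cl a) = (\<forall>u. R u < \<infinity> \<longrightarrow> evalb u a)"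
| "ksat R (Cond a b) = (\<forall>u. (R u < \<infinity> \<and> evalb u a \<and>
       (\<forall>v. R v < \<infinity> \<and> evalb v a \<longrightarrow> R u \<le> R v)) \<longrightarrow> evalb u b)"
| "ksat R (KAnd f g) = (ksat R f \<and> ksat R g)"

definition ranked_model :: "'p klm set \<Rightarrow> 'p ranked \<Rightarrow> bool" where
  "ranked_model K R \<longleftrightarrow> ranked_interp R \<and> (\<forall>f\<in>K. ksat R f)"

definition rc_model :: "'p klm set \<Rightarrow> 'p ranked" where
  "rc_model K = (THE R. ranked_model K R \<and> (\<forall>R'. ranked_model K R' \<longrightarrow> (\<forall>u. R u \<le> R' u)))"

definition RCProp :: "'p klm set \<Rightarrow> 'p klm \<Rightarrow> bool" where
  "RCProp K f \<longleftrightarrow> ksat (rc_model K) f"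

text \<open>A structure is a triple (Pi, sigma, gamma) over a type 'w of precisifications.\<close>
type_synonym ('w, 'p, 's) rss = "'w set \<times> ('s stp \<Rightarrow> 'w set) \<times> ('w \<Rightarrow> 'p ranked)"

fun dsat :: "('w, 'p, 's) rss \<Rightarrow> 'w \<Rightarrow> ('p, 's) drsl \<Rightarrow> bool" where
  "dsat (Pi, sg, gm) w (Base f) = ksat (gm w) f"
| "dsat (Pi, sg, gm) w (Box s p) = (\<forall>w'\<in>sg s. dsat (Pi, sg, gm) w' p)"
| "dsat (Pi, sg, gm) w (Dia s p) = (\<exists>w'\<in>sg s. dsat (Pi, sg, gm) w' p)"
| "dsat (Pi, sg, gm) w (DAnd p q) = (dsat (Pi, sg, gm) w p \<and> dsat (Pi, sg, gm) w q)"
| "dsat (Pi, sg, gm) w (Sharp s1 s2) = (sg s1 \<subseteq> sg s2)"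

definition dmodels :: "('w, 'p, 's) rss \<Rightarrow> ('p, 's) drsl \<Rightarrow> bool" where
  "dmodels M p \<longleftrightarrow> (\<forall>w\<in>fst M. dsat M w p)"

fun normal_form :: "('p, 's) drsl \<Rightarrow> bool" where
  "normal_form (Box s (Base f)) = True"
| "normal_form (Dia s (Base f)) = True"
| "normal_form (Sharp s t) = True"
| "normal_form _ = False"

fun stps :: "('p, 's) drsl \<Rightarrow> 's stp set" where
  "stps (Base f) = {}"
| "stps (Box s p) = insert s (stps p)"
| "stps (Dia s p) = insert s (stps p)"
| "stps (DAnd p q) = stps p \<union> stps q"
| "stps (Sharp s t) = {s, t}"

definition sharper :: "('p, 's) drsl set \<Rightarrow> 's stp \<Rightarrow> 's stp \<Rightarrow> bool" where
  "sharper KK s t \<longleftrightarrow> t = s \<or> t = Univ \<or> (s, t) \<in> {(a, b). Sharp a b \<in> KK}\<^sup>+"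

definition Ks :: "('p, 's) drsl set \<Rightarrow> 's stp \<Rightarrow> 'p klm set" where
  "Ks KK s = {f. \<exists>t. Box t (Base f) \<in> KK \<and> sharper KK s t}"

definition Know :: "('p, 's) drsl set \<Rightarrow> 's stp \<Rightarrow> 'p klm set set" where
  "Know KK s = {Ks KK (Named t) | t. sharper KK (Named t) s}
     \<union> {insert f (Ks KK t) | t f. sharper KK t s \<and> Dia t (Base f) \<in> KK}"

fun query :: "('p, 's) drsl \<Rightarrow> bool" where
  "query (Base f) = True"
| "query (Box s (Base f)) = True"
| "query (Dia s (Base f)) = True"
| "query (DAnd p q) = (query p \<and> query q)"
| "query _ = False"

fun rc_entails :: "('p, 's) drsl set \<Rightarrow> ('p, 's) drsl \<Rightarrow> bool" where
  "rc_entails KK (Base f) = (\<forall>K\<in>Know KK Univ. RCProp K f)"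
| "rc_entails KK (Box s (Base f)) = (\<forall>K\<in>Know KK s. RCProp K f)"
| "rc_entails KK (Dia s (Base f)) = (\<exists>K\<in>Know KK s. RCProp K f)"
| "rc_entails KK (DAnd p q) = (rc_entails KK p \<and> rc_entails KK q)"
| "rc_entails KK _ = undefined"

datatype ('p, 's) prec = PNamed 's | PDia "'s stp" "'p klm"

fun rc_gamma :: "('p, 's) drsl set \<Rightarrow> ('p, 's) prec \<Rightarrow> 'p ranked" where
  "rc_gamma KK (PNamed s) = rc_model (Ks KK (Named s))"
| "rc_gamma KK (PDia s f) = rc_model (insert f (Ks KK s))"

definition M_RC :: "('p, 's) drsl set \<Rightarrow> (('p, 's) prec, 'p, 's) rss" where
  "M_RC KK =
    (range PNamed \<union> {PDia t f | t f. Dia t (Base f) \<in> KK},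
     \<lambda>s. {PNamed t | t. sharper KK (Named t) s}
          \<union> {PDia t f | t f. Dia t (Base f) \<in> KK \<and> sharper KK t s},
     rc_gamma KK)"

end

theory Submission
  imports Defs
begin

lemma img_sg: "rc_gamma KK ` (fst (snd (M_RC KK)) s) = rc_model ` Know KK s"
  unfolding M_RC_def Know_def
  apply (auto simp: image_iff)
  subgoal for t by (rule bexI[where x="PNamed t"]) auto
  subgoal for t f by (rule bexI[where x="PDia t f"]) auto
  done

lemma img_pi: "rc_gamma KK ` (fst (M_RC KK)) = rc_model ` Know KK Univ"
  unfolding M_RC_def Know_def sharper_def
  apply (auto simp: image_iff)
  subgoal for t by (rule bexI[where x="PNamed t"]) auto
  subgoal for t f by (rule bexI[where x="PDia t f"]) auto
  done

lemma ne: "fst (M_RC KK) \<noteq> {}" by (auto simp: M_RC_def)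

lemma dm_and: "dmodels M (DAnd p q) \<longleftrightarrow> dmodels M p \<and> dmodels M q"
  by (cases M) (auto simp: dmodels_def)

lemma key:
  fixes KK :: "('p, 's) drsl set" and \<psi> :: "('p, 's) drsl"
  shows "query \<psi> \<Longrightarrow> rc_entails KK \<psi> \<longleftrightarrow> dmodels (M_RC KK) \<psi>"
proof (induction \<psi> rule: query.induct)
  case (1 f)
  have "dmodels (M_RC KK) (Base f) = (\<forall>R\<in>rc_gamma KK ` fst (M_RC KK). ksat R f)"
    by (simp add: dmodels_def M_RC_def)
  also have "\<dots> = (\<forall>R\<in>rc_model ` Know KK Univ. ksat R f)" by (simp only: img_pi)
  finally show ?case by (simp add: RCProp_def)
next
  case (2 s f)
  have "dmodels (M_RC KK) (Box s (Base f)) = (\<forall>R\<in>rc_gamma KK ` fst (snd (M_RC KK)) s. ksat R f)"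
    unfolding dmodels_def M_RC_def by simp blast
  also have "\<dots> = (\<forall>R\<in>rc_model ` Know KK s. ksat R f)" by (simp only: img_sg)
  finally show ?case by (simp add: RCProp_def)
next
  case (3 s f)
  have "dmodels (M_RC KK) (Dia s (Base f)) = (\<exists>R\<in>rc_gamma KK ` fst (snd (M_RC KK)) s. ksat R f)"
    unfolding dmodels_def M_RC_def by simp blast
  also have "\<dots> = (\<exists>R\<in>rc_model ` Know KK s. ksat R f)" by (simp only: img_sg)
  finally show ?case by (simp add: RCProp_def)
next
  case (4 p q)
  then show ?case by (simp add: dm_and)
qed auto

theorem theorem2:
  fixes KK :: "('p::finite, 's::finite) drsl set" and \<psi> :: "('p, 's) drsl"
  assumes "\<forall>\<phi>\<in>KK. normal_form \<phi>"
    and "\<forall>s::'s. \<exists>\<phi>\<in>KK. Named s \<in> stps \<phi>"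
    and "query \<psi>"
  shows "rc_entails KK \<psi> \<longleftrightarrow> dmodels (M_RC KK) \<psi>"
  using key assms(3) by blast

end
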